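(* Let $X=[-1,1]\times\mathbb{R}$ with the Lorentzian metric $g=-dt^2+ds^2$. Equip $X$ with the metric \[ d_{\mathrm N}(x,y)=\operatorname*{ess\,sup}_{z\in X}\big|\,|\sigma(x,z)|-|\sigma(y,z)|\,\big|. \] Then no continuous curve $c\colon[0,1]\to X$ with $x_2(c(0))\neq x_2(c(1))$ is $d_{\mathrm N}$-rectifiable.
   Context: The signed Lorentzian distance $\sigma$ of $g$ is defined as follows, with the supremum taken over causal curves $c$ from $x$ to $y$ and $l(c)=\int\sqrt{-g(c',c')}$: \begin{itemize} \item $\sigma(x,y)=\sup l(c)$ if $y$ lies in the causal future of $x$; \item $\sigma(x,y)=-\sup l(c)$ if $y$ lies in the causal past of $x$; \item $\sigma(x,y)=0$ otherwise. \end{itemize} The essential supremum is with respect to Lebesgue measure. $x_2$ denotes the second coordinate $s$. A curve is $d_{\mathrm N}$-rectifiable if $\sup\sum_i d_{\mathrm N}(c(t_{i-1}),c(t_i))<\infty$, the supremum being over all finite partitions $0=t_0<\dots<t_N=1$. *)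

theory Defs
  imports "HOL-Analysis.Analysis" "HOL-Probability.Essential_Supremum"
begin

text \<open>The strip X = [-1,1] x R, points are pairs (t,s); t time coordinate, s = x_2.\<close>
definition strip :: "(real \<times> real) set" where
  "strip = {-1..1} \<times> UNIV"

definition gL :: "real \<times> real \<Rightarrow> real \<times> real \<Rightarrow> real" where
  "gL v w = - fst v * fst w + snd v * snd w"

definition future_causal_curve :: "(real \<Rightarrow> real \<times> real) \<Rightarrow> real \<times> real \<Rightarrow> real \<times> real \<Rightarrow> bool" where
  "future_causal_curve c x y \<longleftrightarrow>
     c piecewise_C1_differentiable_on {0..1} \<and> c ` {0..1} \<subseteq> strip \<and> c 0 = x \<and> c 1 = y \<and>
     (\<forall>t\<in>{0..1}. c differentiable (at t within {0..1}) \<longrightarrow>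
        (let v = vector_derivative c (at t within {0..1}) in gL v v \<le> 0 \<and> fst v \<ge> 0))"

definition past_causal_curve :: "(real \<Rightarrow> real \<times> real) \<Rightarrow> real \<times> real \<Rightarrow> real \<times> real \<Rightarrow> bool" where
  "past_causal_curve c x y \<longleftrightarrow>
     c piecewise_C1_differentiable_on {0..1} \<and> c ` {0..1} \<subseteq> strip \<and> c 0 = x \<and> c 1 = y \<and>
     (\<forall>t\<in>{0..1}. c differentiable (at t within {0..1}) \<longrightarrow>
        (let v = vector_derivative c (at t within {0..1}) in gL v v \<le> 0 \<and> fst v \<le> 0))"

definition lor_length :: "(real \<Rightarrow> real \<times> real) \<Rightarrow> real" where
  "lor_length c = integral {0..1}
     (\<lambda>t. let v = vector_derivative c (at t within {0..1}) in sqrt (- gL v v))"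

definition causal_future :: "real \<times> real \<Rightarrow> (real \<times> real) set" where
  "causal_future x = {y. \<exists>c. future_causal_curve c x y}"

definition causal_past :: "real \<times> real \<Rightarrow> (real \<times> real) set" where
  "causal_past x = {y. \<exists>c. past_causal_curve c x y}"

definition sigma :: "real \<times> real \<Rightarrow> real \<times> real \<Rightarrow> real" where
  "sigma x y =
     (if y \<in> causal_future x then Sup (lor_length ` {c. future_causal_curve c x y})
      else if y \<in> causal_past x then - Sup (lor_length ` {c. past_causal_curve c x y})
      else 0)"

definition dN :: "real \<times> real \<Rightarrow> real \<times> real \<Rightarrow> ereal" where
  "dN x y = esssup (lebesgue_on strip)
     (\<lambda>z. ereal \<bar>\<bar>sigma x z\<bar> - \<bar>sigma y z\<bar>\<bar>)"

definition dN_rectifiable :: "(real \<Rightarrow> real \<times> real) \<Rightarrow> bool" where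
  "dN_rectifiable c \<longleftrightarrow>
     (SUP (N, t) \<in> {(N::nat, t::nat \<Rightarrow> real). t 0 = 0 \<and> t N = 1 \<and> (\<forall>i<N. t i < t (Suc i))}.
        (\<Sum>i\<in>{1..N}. dN (c (t (i - 1))) (c (t i)))) < \<infinity>"

end

theory Submission
  imports Defs
begin

lemma nonneg_fin:
  fixes g :: "real \<Rightarrow> real"
  assumes "(g has_integral i) {a..b}" "finite s" "\<And>x. x \<in> {a<..<b} - s \<Longrightarrow> 0 \<le> g x"
  shows "0 \<le> i"
proof -
  let ?h = "\<lambda>x. if x \<in> s \<union> {a,b} then 0 else g x"
  have "(?h has_integral i) {a..b}"
    by (rule has_integral_spike_finite[OF _ _ assms(1), of "s \<union> {a,b}"]) (use assms in auto)
  moreover have "\<And>x. x \<in> {a..b} \<Longrightarrow> 0 \<le> ?h x" using assms(3) by force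
  ultimately show ?thesis by (rule has_integral_nonneg)
qed

lemma vec_ineq:
  fixes v :: "real \<times> real" and f :: real
  assumes "f = 1 \<or> f = -1" "gL v v \<le> 0" "f * fst v \<ge> 0"
  shows "\<bar>snd v\<bar> \<le> f * fst v" "sqrt (- gL v v) \<le> f * fst v"
proof -
  have sq: "(snd v)^2 \<le> (f * fst v)^2" using assms unfolding gL_def
    by (auto simp: power2_eq_square)
  show "\<bar>snd v\<bar> \<le> f * fst v" using sq assms(3)
    by (metis abs_le_square_iff abs_of_nonneg)
  have "- gL v v \<le> (f * fst v)^2" using assms unfolding gL_def
    by (auto simp: power2_eq_square)
  then have "sqrt (- gL v v) \<le> sqrt ((f * fst v)^2)" by (rule real_sqrt_le_mono)
  then show "sqrt (- gL v v) \<le> f * fst v" using assms(3) by simp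
qed

lemma curve_bound:
  fixes c :: "real \<Rightarrow> real \<times> real" and f :: real
  assumes f: "f = 1 \<or> f = -1" and pw: "c piecewise_C1_differentiable_on {0..1}"
    and cond: "\<forall>t\<in>{0..1}. c differentiable (at t within {0..1}) \<longrightarrow>
        (let v = vector_derivative c (at t within {0..1}) in gL v v \<le> 0 \<and> f * fst v \<ge> 0)"
  shows "\<bar>snd (c 1) - snd (c 0)\<bar> \<le> f * (fst (c 1) - fst (c 0))"
    and "lor_length c \<le> f * (fst (c 1) - fst (c 0))"
proof -
  define V where "V t = vector_derivative c (at t within {0..1})" for t
  obtain s D where s: "finite s" and cont: "continuous_on {0..1} c"
    and D: "\<And>x. x \<in> {0..1} - s \<Longrightarrow> (c has_vector_derivative D x) (at x)"
    using pw unfolding piecewise_C1_differentiable_on_def C1_differentiable_on_def by blast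
  have VD: "(c has_vector_derivative V t) (at t)" and P: "gL (V t) (V t) \<le> 0 \<and> f * fst (V t) \<ge> 0"
    if t: "t \<in> {0<..<1} - s" for t
  proof -
    have "(c has_vector_derivative D t) (at t)" using D t by auto
    moreover have "V t = D t" unfolding V_def
      by (rule vector_derivative_at_within_ivl[OF \<open>(c has_vector_derivative D t) (at t)\<close>]) (use t in auto)
    ultimately show "(c has_vector_derivative V t) (at t)" by simp
    then have "c differentiable (at t within {0..1})"
      by (meson differentiable_at_withinI differentiableI_vector)
    then show "gL (V t) (V t) \<le> 0 \<and> f * fst (V t) \<ge> 0" using cond t unfolding V_def Let_def by auto
  qed
  have I: "(V has_integral (c 1 - c 0)) {0..1}"
    by (rule fundamental_theorem_of_calculus_interior_strong[OF s _ _ cont]) (use VD in auto)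
  have Ifst: "((\<lambda>t. fst (V t)) has_integral fst (c 1 - c 0)) {0..1}"
    using has_integral_linear[OF I bounded_linear_fst] by (simp add: o_def)
  have Isnd: "((\<lambda>t. snd (V t)) has_integral snd (c 1 - c 0)) {0..1}"
    using has_integral_linear[OF I bounded_linear_snd] by (simp add: o_def)
  then have Isnd: "((\<lambda>t. snd (V t)) has_integral (snd (c 1) - snd (c 0))) {0..1}" by simp
  have Iff: "((\<lambda>t. f * fst (V t)) has_integral f * (fst (c 1) - fst (c 0))) {0..1}"
    using has_integral_mult_right[OF Ifst, of f] by simp
  have A: "0 \<le> f * (fst (c 1) - fst (c 0)) - (snd (c 1) - snd (c 0))"
    apply (rule nonneg_fin[OF has_integral_diff[OF Iff Isnd] s])
    using vec_ineq(1)[OF f] P by fastforce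
  have B: "0 \<le> f * (fst (c 1) - fst (c 0)) + (snd (c 1) - snd (c 0))"
    apply (rule nonneg_fin[OF has_integral_add[OF Iff Isnd] s])
    using vec_ineq(1)[OF f] P by fastforce
  show C: "\<bar>snd (c 1) - snd (c 0)\<bar> \<le> f * (fst (c 1) - fst (c 0))" using A B by linarith
  let ?G = "\<lambda>t. sqrt (- gL (V t) (V t))"
  have ll: "lor_length c = integral {0..1} ?G" unfolding lor_length_def V_def Let_def by simp
  show "lor_length c \<le> f * (fst (c 1) - fst (c 0))"
  proof (cases "?G integrable_on {0..1}")
    case True
    have "0 \<le> f * (fst (c 1) - fst (c 0)) - integral {0..1} ?G"
      apply (rule nonneg_fin[OF has_integral_diff[OF Iff integrable_integral[OF True]] s])
      using vec_ineq(2)[OF f] P by fastforce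
    then show ?thesis using ll by simp
  next
    case False
    then show ?thesis using ll C not_integrable_integral by fastforce
  qed
qed

lemma future_bound:
  assumes "future_causal_curve c x z"
  shows "\<bar>snd z - snd x\<bar> \<le> fst z - fst x" "lor_length c \<le> fst z - fst x"
  using curve_bound[of 1 c] assms unfolding future_causal_curve_def by auto

lemma past_bound:
  assumes "past_causal_curve c x z"
  shows "\<bar>snd z - snd x\<bar> \<le> fst x - fst z" "lor_length c \<le> fst x - fst z"
  using curve_bound[of "-1" c] assms unfolding past_causal_curve_def by auto

lemma sigma_zero:
  assumes "\<bar>snd z - snd y\<bar> > \<bar>fst z - fst y\<bar>"
  shows "sigma y z = 0"
proof -
  have "z \<notin> causal_future y" using future_bound(1) assms unfolding causal_future_def by fastforce
  moreover have "z \<notin> causal_past y" using past_bound(1) assms unfolding causal_past_def by fastforce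
  ultimately show ?thesis unfolding sigma_def by simp
qed

lemma convex_strip: "convex strip"
  unfolding strip_def by (intro convex_Times convex_real_interval convex_UNIV)

lemma line_in_strip: "x \<in> strip \<Longrightarrow> z \<in> strip \<Longrightarrow> linepath x z ` {0..1} \<subseteq> strip"
  unfolding linepath_image_01 by (rule closed_segment_subset[OF _ _ convex_strip])

lemma lor_length_line: "lor_length (linepath x z) = sqrt (- gL (z - x) (z - x))"
proof -
  have "lor_length (linepath x z) = integral {0..1} (\<lambda>t::real. sqrt (- gL (z - x) (z - x)))"
    unfolding lor_length_def Let_def
    by (intro integral_cong) (simp add: vector_derivative_linepath_within)
  then show ?thesis by simp
qed

lemma sigma_lower:
  assumes x: "x \<in> strip" and z: "z \<in> strip" and tl: "\<bar>snd z - snd x\<bar> < \<bar>fst z - fst x\<bar>"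
  shows "sqrt ((fst z - fst x)^2 - (snd z - snd x)^2) \<le> \<bar>sigma x z\<bar>"
proof -
  have L: "lor_length (linepath x z) = sqrt ((fst z - fst x)^2 - (snd z - snd x)^2)"
    unfolding lor_length_line gL_def by (simp add: power2_eq_square algebra_simps)
  have sq: "(snd z - snd x)^2 \<le> (fst z - fst x)^2" using tl abs_le_square_iff less_imp_le by metis
  have key: "gL (z - x) (z - x) \<le> 0" using sq unfolding gL_def by (simp add: power2_eq_square algebra_simps)
  from sq have Lnn: "0 \<le> lor_length (linepath x z)" unfolding L by simp
  have pw: "linepath x z piecewise_C1_differentiable_on {0..1}"
    using valid_path_linepath unfolding valid_path_def .
  have ends: "linepath x z 0 = x" "linepath x z 1 = z" by (simp_all add: linepath_def)
  show ?thesis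
  proof (cases "fst z > fst x")
    case True
    have fc: "future_causal_curve (linepath x z) x z"
      unfolding future_causal_curve_def Let_def
      using pw line_in_strip[OF x z] ends True tl
      using key by (auto simp: vector_derivative_linepath_within)
    hence inF: "z \<in> causal_future x" unfolding causal_future_def by blast
    have bdd: "bdd_above (lor_length ` {c. future_causal_curve c x z})"
      using future_bound(2) by (intro bdd_aboveI2[where M="fst z - fst x"]) auto
    have "lor_length (linepath x z) \<le> Sup (lor_length ` {c. future_causal_curve c x z})"
      by (rule cSup_upper[OF _ bdd]) (use fc in auto)
    then show ?thesis using inF L unfolding sigma_def by auto
  next
    case False
    with tl have lt: "fst z < fst x" by auto
    have pc: "past_causal_curve (linepath x z) x z"
      unfolding past_causal_curve_def Let_def
      using pw line_in_strip[OF x z] ends lt tl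
      using key by (auto simp: vector_derivative_linepath_within)
    hence inP: "z \<in> causal_past x" unfolding causal_past_def by blast
    have nF: "z \<notin> causal_future x" using future_bound(1) lt unfolding causal_future_def by fastforce
    have bdd: "bdd_above (lor_length ` {c. past_causal_curve c x z})"
      using past_bound(2) by (intro bdd_aboveI2[where M="fst x - fst z"]) auto
    have "lor_length (linepath x z) \<le> Sup (lor_length ` {c. past_causal_curve c x z})"
      by (rule cSup_upper[OF _ bdd]) (use pc in auto)
    then show ?thesis using inP nF L Lnn unfolding sigma_def by auto
  qed
qed

lemma esssup_ge:
  fixes f :: "'a \<Rightarrow> ereal"
  assumes A: "A \<in> sets M" "emeasure M A > 0" and f: "\<And>x. x \<in> A \<Longrightarrow> m \<le> f x"
  shows "m \<le> esssup M f"
proof (cases "f \<in> borel_measurable M")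
  case False then show ?thesis by (simp add: esssup_non_measurable)
next
  case True
  show ?thesis unfolding esssup_eq_AE[OF True]
  proof (rule Inf_greatest, clarsimp)
    fix z assume ae: "AE x in M. f x \<le> z"
    show "m \<le> z"
    proof (rule ccontr)
      assume "\<not> m \<le> z"
      then have "z < m" by simp
      have "AE x in M. x \<notin> A" using ae
        by eventually_elim (use f \<open>z < m\<close> in force)
      then have "A \<in> null_sets M" using AE_iff_null_sets[OF A(1)] by simp
      then show False using A(2) by auto
    qed
  qed
qed

lemma strip_sets: "strip \<in> sets lebesgue"
proof -
  have "closed strip" unfolding strip_def by (intro closed_Times closed_atLeastAtMost closed_UNIV)
  then show ?thesis by simp
qed

lemma box_meas:
  fixes a1 a2 b1 b2 :: real
  assumes "a1 < b1" "a2 < b2"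
  shows "emeasure lebesgue (box (a1,a2) (b1,b2)) > 0"
  using assms by (simp add: emeasure_lborel_box_eq Basis_prod_def inner_Pair Basis_real_def)

lemma dN_lower:
  assumes "a1 < b1" "a2 < b2" and Asub: "box (a1,a2) (b1,b2) \<subseteq> strip"
    and m: "\<And>z. z \<in> box (a1,a2) (b1,b2) \<Longrightarrow> m \<le> \<bar>\<bar>sigma x z\<bar> - \<bar>sigma y z\<bar>\<bar>"
  shows "ereal m \<le> dN x y"
  unfolding dN_def
proof (rule esssup_ge)
  let ?A = "box (a1,a2) (b1,b2)"
  have As: "?A \<in> sets lebesgue" by simp
  show "?A \<in> sets (lebesgue_on strip)" using As Asub strip_sets
    by (simp add: sets_restrict_space_iff)
  show "0 < emeasure (lebesgue_on strip) ?A"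
    using box_meas[OF assms(1,2)] Asub strip_sets by (simp add: emeasure_restrict_space)
  show "\<And>z. z \<in> ?A \<Longrightarrow> ereal m \<le> ereal \<bar>\<bar>sigma x z\<bar> - \<bar>sigma y z\<bar>\<bar>" using m by simp
qed

lemma mem_box_pair:
  fixes a1 a2 b1 b2 :: real
  shows "z \<in> box (a1,a2) (b1,b2) \<longleftrightarrow> a1 < fst z \<and> fst z < b1 \<and> a2 < snd z \<and> snd z < b2"
  by (cases z) (auto simp: mem_box Basis_prod_def Basis_real_def inner_Pair)

lemma key:
  fixes p q :: "real \<times> real" and f e \<delta> :: real
  assumes p: "p \<in> strip" and q: "q \<in> strip" and f: "f = 1 \<or> f = -1" and fp: "f * fst p \<le> 0"
    and e: "e = 1 \<or> e = -1" and d: "\<delta> = e * (snd q - snd p)" "0 < \<delta>" "\<delta> \<le> 1/4"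
    and Q1: "0 \<le> f * (fst q - fst p)" "f * (fst q - fst p) \<le> 1/4"
  shows "ereal (sqrt \<delta> / 4) \<le> dN p q"
proof -
  define r where "r = \<delta> / 8"
  define c1 where "c1 = fst p + f * (1/4 + \<delta>/8)"
  define c2 where "c2 = snd p + e * (-1/4 + \<delta>/2)"
  have ff: "f * f = 1" and ee: "e * e = 1" using f e by auto
  have af: "\<bar>f * w\<bar> = \<bar>w\<bar>" for w using f by auto
  have ae: "\<bar>e * w\<bar> = \<bar>w\<bar>" for w using e by auto
  have main: "z \<in> strip \<and> sqrt \<delta> / 4 \<le> \<bar>\<bar>sigma p z\<bar> - \<bar>sigma q z\<bar>\<bar>"
    if zb: "z \<in> box (c1 - r, c2 - r) (c1 + r, c2 + r)" for z
  proof -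
    define a where "a = f * (fst z - fst p)"
    define b where "b = e * (snd z - snd p)"
    define Q where "Q = f * (fst q - fst p)"
    have z1: "fst z - fst p = f * a" using f unfolding a_def by (auto simp: algebra_simps)
    have z2: "snd z - snd p = e * b" using e unfolding b_def by (auto simp: algebra_simps)
    have z3: "fst z - fst q = f * (a - Q)" using f unfolding a_def Q_def by (auto simp: algebra_simps)
    have z4: "snd z - snd q = e * (b - \<delta>)" using e d(1) unfolding b_def by (auto simp: algebra_simps)
    have za: "\<bar>fst z - c1\<bar> < r" "\<bar>snd z - c2\<bar> < r" using zb unfolding mem_box_pair by auto
    have "a - (1/4 + \<delta>/8) = f * (fst z - c1)" using f unfolding a_def c1_def by (auto simp: algebra_simps)
    then have ab: "\<bar>a - (1/4 + \<delta>/8)\<bar> < r" using za af by metis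
    have "b - (-1/4 + \<delta>/2) = e * (snd z - c2)" using e unfolding b_def c2_def by (auto simp: algebra_simps)
    then have bb: "\<bar>b - (-1/4 + \<delta>/2)\<bar> < r" using za ae by metis
    have "fst z = fst p + f * a" using z1 by simp
    moreover have "\<bar>fst p\<bar> \<le> 1" using p unfolding strip_def by auto
    moreover have "0 < a" "a < 1/2" using ab d(2,3) unfolding r_def abs_less_iff by auto
    ultimately have "\<bar>fst z\<bar> \<le> 1" using f fp by auto
    then have zs: "z \<in> strip" unfolding strip_def by (cases z) auto
    have apb: "3 * \<delta> / 8 \<le> a + b" and amb: "1/4 \<le> a - b" using ab bb d(2,3) unfolding r_def abs_less_iff by auto
    have tl: "\<bar>snd z - snd p\<bar> < \<bar>fst z - fst p\<bar>" unfolding z1 z2 af ae using apb amb d(2,3) by auto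
    have "\<delta> / 16 \<le> (3 * \<delta> / 8) * (1/4)" using d by simp
    also have "\<dots> \<le> (a + b) * (a - b)" by (rule mult_mono) (use apb amb d in auto)
    also have "\<dots> = (fst z - fst p)^2 - (snd z - snd p)^2"
      unfolding z1 z2 power2_eq_square using f e by (auto simp: algebra_simps)
    finally have "sqrt (\<delta> / 16) \<le> sqrt ((fst z - fst p)^2 - (snd z - snd p)^2)"
      by (rule real_sqrt_le_mono)
    also have "\<dots> \<le> \<bar>sigma p z\<bar>" by (rule sigma_lower[OF p zs tl])
    finally have s1: "sqrt \<delta> / 4 \<le> \<bar>sigma p z\<bar>" by (simp add: real_sqrt_divide)
    have "\<bar>snd z - snd q\<bar> > \<bar>fst z - fst q\<bar>" unfolding z3 z4 af ae
      using apb amb d(2,3) Q1 ab bb unfolding Q_def r_def abs_less_iff by auto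
    then have "sigma q z = 0" by (rule sigma_zero)
    then show ?thesis using s1 zs by simp
  qed
  show ?thesis
    by (rule dN_lower[of "c1 - r" "c1 + r" "c2 - r" "c2 + r"]) (use main d in \<open>auto simp: r_def\<close>)
qed

lemma dN_sym: "dN x y = dN y x"
  unfolding dN_def by (simp add: abs_minus_commute)

lemma dN_nonneg: "ereal 0 \<le> dN x y"
  by (rule dN_lower[of 0 "1/2" 0 "1/2"]) (auto simp: mem_box_pair strip_def)

lemma key_dir:
  fixes p q :: "real \<times> real" and f :: real
  assumes p: "p \<in> strip" and q: "q \<in> strip" and f: "f = 1 \<or> f = -1" and fp: "f * fst p \<le> 0"
    and Q1: "0 \<le> f * (fst q - fst p)" "f * (fst q - fst p) \<le> 1/4"
    and ne: "snd q \<noteq> snd p" and ds: "\<bar>snd q - snd p\<bar> \<le> 1/4"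
  shows "ereal (sqrt \<bar>snd q - snd p\<bar> / 4) \<le> dN p q"
proof (cases "snd q > snd p")
  case True
  then show ?thesis using key[OF p q f fp, of 1 "\<bar>snd q - snd p\<bar>"] Q1 ds by auto
next
  case False
  then show ?thesis using key[OF p q f fp, of "-1" "\<bar>snd q - snd p\<bar>"] Q1 ds ne by auto
qed

lemma pair_bound:
  fixes x y :: "real \<times> real"
  assumes x: "x \<in> strip" and y: "y \<in> strip"
    and dt: "\<bar>fst y - fst x\<bar> \<le> 1/4" and ds: "\<bar>snd y - snd x\<bar> \<le> 1/4"
  shows "ereal (sqrt \<bar>snd y - snd x\<bar> / 4) \<le> dN x y"
proof (cases "snd y = snd x")
  case True then show ?thesis using dN_nonneg by simp
next
  case ne: False
  define fx where "fx = (if fst x \<le> 0 then 1 else (-1::real))"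
  define fy where "fy = (if fst y \<le> 0 then 1 else (-1::real))"
  show ?thesis
  proof (cases "0 \<le> fx * (fst y - fst x)")
    case True
    show ?thesis
      by (rule key_dir[OF x y, of fx]) (use True dt ds ne in \<open>auto simp: fx_def split: if_splits\<close>)
  next
    case False
    have "ereal (sqrt \<bar>snd x - snd y\<bar> / 4) \<le> dN y x"
      by (rule key_dir[OF y x, of fy]) (use False dt ds ne in \<open>auto simp: fx_def fy_def abs_minus_commute split: if_splits\<close>)
    then show ?thesis by (simp add: dN_sym abs_minus_commute)
  qed
qed

lemma tele_abs:
  fixes g :: "nat \<Rightarrow> real"
  shows "\<bar>g N - g 0\<bar> \<le> (\<Sum>i\<in>{1..N}. \<bar>g i - g (i - 1)\<bar>)"
proof (induction N)
  case 0 then show ?case by simp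
next
  case (Suc N)
  have "\<bar>g (Suc N) - g 0\<bar> \<le> \<bar>g N - g 0\<bar> + \<bar>g (Suc N) - g N\<bar>" by simp
  also have "\<dots> \<le> (\<Sum>i\<in>{1..N}. \<bar>g i - g (i - 1)\<bar>) + \<bar>g (Suc N) - g (Suc N - 1)\<bar>"
    using Suc by simp
  also have "\<dots> = (\<Sum>i\<in>{1..Suc N}. \<bar>g i - g (i - 1)\<bar>)" by simp
  finally show ?case .
qed

lemma sqrt_ge_lin:
  assumes "0 \<le> d" "d \<le> \<rho>" "0 < \<rho>"
  shows "d / sqrt \<rho> \<le> sqrt d"
proof -
  have "d = sqrt d * sqrt d" using assms by simp
  also have "\<dots> \<le> sqrt d * sqrt \<rho>" using assms by (intro mult_left_mono) auto
  finally show ?thesis using assms by (simp add: divide_le_eq)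
qed

theorem theorem3:
  fixes c :: "real \<Rightarrow> real \<times> real"
  assumes "continuous_on {0..1} c"
    and "c ` {0..1} \<subseteq> strip"
    and "snd (c 0) \<noteq> snd (c 1)"
  shows "\<not> dN_rectifiable c"
proof -
  let ?P = "{(N::nat, t::nat \<Rightarrow> real). t 0 = 0 \<and> t N = 1 \<and> (\<forall>i<N. t i < t (Suc i))}"
  let ?F = "\<lambda>(N, t). (\<Sum>i\<in>{1..N}. dN (c (t (i - 1))) (c (t i)))"
  define D where "D = \<bar>snd (c 1) - snd (c 0)\<bar>"
  have Dpos: "0 < D" using assms(3) unfolding D_def by auto
  have uc: "uniformly_continuous_on {0..1} c"
    using compact_uniformly_continuous[OF assms(1)] by simp
  have big: "ereal M \<le> (SUP x\<in>?P. ?F x)" if M: "M > 0" for M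
  proof -
    define \<rho> where "\<rho> = min (1/4) ((D / (4 * M))^2)"
    have rpos: "0 < \<rho>" using Dpos M unfolding \<rho>_def by auto
    obtain d where d: "d > 0" and dd: "\<And>x x'. x \<in> {0..1} \<Longrightarrow> x' \<in> {0..1} \<Longrightarrow> dist x' x < d \<Longrightarrow> dist (c x') (c x) < \<rho>"
      using uc rpos unfolding uniformly_continuous_on_def by metis
    obtain N :: nat where N: "1 / d < real N" using reals_Archimedean2 by blast
    have Npos: "0 < N" using N d by (cases N) (auto simp: divide_less_0_iff)
    define t where "t i = real i / real N" for i
    have tP: "(N, t) \<in> ?P" using Npos unfolding t_def by (auto simp: divide_strict_right_mono)
    define g where "g i = snd (c (t i))" for i
    have step: "ereal (sqrt \<bar>g i - g (i - 1)\<bar> / 4) \<le> dN (c (t (i - 1))) (c (t i))"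
      and small: "\<bar>g i - g (i - 1)\<bar> \<le> \<rho>" if i: "i \<in> {1..N}" for i
    proof -
      have t1: "t (i - 1) \<in> {0..1}" "t i \<in> {0..1}" using i Npos unfolding t_def by auto
      have "dist (t i) (t (i - 1)) = 1 / real N" using i unfolding t_def dist_real_def
        by (auto simp: of_nat_diff diff_divide_distrib[symmetric])
      also have "\<dots> < d" using N d Npos by (simp add: divide_less_eq mult.commute)
      finally have "dist (c (t i)) (c (t (i - 1))) < \<rho>" using dd t1 by blast
      then have a: "\<bar>fst (c (t i)) - fst (c (t (i - 1)))\<bar> < \<rho>" "\<bar>snd (c (t i)) - snd (c (t (i - 1)))\<bar> < \<rho>"
        using dist_fst_le[of "c (t i)" "c (t (i - 1))"] dist_snd_le[of "c (t i)" "c (t (i - 1))"]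
        unfolding dist_real_def by linarith+
      have r4: "\<rho> \<le> 1/4" unfolding \<rho>_def by simp
      show "\<bar>g i - g (i - 1)\<bar> \<le> \<rho>" using a unfolding g_def by simp
      show "ereal (sqrt \<bar>g i - g (i - 1)\<bar> / 4) \<le> dN (c (t (i - 1))) (c (t i))"
        unfolding g_def by (rule pair_bound) (use t1 assms(2) a r4 in auto)
    qed
    have gends: "g 0 = snd (c 0)" "g N = snd (c 1)" using Npos unfolding g_def t_def by auto
    have "M \<le> D / (4 * sqrt \<rho>)"
    proof -
      have "sqrt \<rho> \<le> sqrt ((D / (4 * M))^2)" unfolding \<rho>_def by (intro real_sqrt_le_mono) simp
      also have "\<dots> = D / (4 * M)" using Dpos M by simp
      finally have "sqrt \<rho> \<le> D / (4 * M)" .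
      then show ?thesis using M rpos by (simp add: field_simps)
    qed
    also have "D / (4 * sqrt \<rho>) \<le> (\<Sum>i\<in>{1..N}. \<bar>g i - g (i - 1)\<bar>) / (4 * sqrt \<rho>)"
      using tele_abs[of g N] gends rpos unfolding D_def by (intro divide_right_mono) (auto simp: abs_minus_commute)
    also have "\<dots> = (\<Sum>i\<in>{1..N}. (\<bar>g i - g (i - 1)\<bar> / sqrt \<rho>) / 4)"
      by (simp add: sum_divide_distrib mult.commute)
    also have "\<dots> \<le> (\<Sum>i\<in>{1..N}. sqrt \<bar>g i - g (i - 1)\<bar> / 4)"
      by (intro sum_mono divide_right_mono sqrt_ge_lin) (use small rpos in auto)
    finally have "ereal M \<le> ereal (\<Sum>i\<in>{1..N}. sqrt \<bar>g i - g (i - 1)\<bar> / 4)" by simp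
    also have "\<dots> = (\<Sum>i\<in>{1..N}. ereal (sqrt \<bar>g i - g (i - 1)\<bar> / 4))" by (simp add: sum_ereal)
    also have "\<dots> \<le> (\<Sum>i\<in>{1..N}. dN (c (t (i - 1))) (c (t i)))" by (intro sum_mono step)
    also have "\<dots> = ?F (N, t)" by simp
    also have "\<dots> \<le> (SUP x\<in>?P. ?F x)" by (rule SUP_upper[OF tP])
    finally show ?thesis .
  qed
  have "(SUP x\<in>?P. ?F x) = \<infinity>"
  proof (rule ereal_top)
    fix B
    have "ereal B \<le> ereal (max 1 B)" by simp
    also have "\<dots> \<le> (SUP x\<in>?P. ?F x)" by (rule big) simp
    finally show "ereal B \<le> (SUP x\<in>?P. ?F x)" .
  qed
  then show ?thesis unfolding dN_rectifiable_def by simp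
qed

end
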